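(* Let $\mathcal A$ be a weakly amenable Banach algebra and $I$ a closed two-sided ideal of $\mathcal A$ which has a bounded approximate identity $(e_\alpha)_\alpha$ that is quasi-central, i.e. $\lim_\alpha(ae_\alpha-e_\alpha a)=0$ for every $a\in\mathcal A$. Then $\mathcal A$ is $I$-weakly amenable, i.e. $H^1(\mathcal A,I^* )=\{0\}$.
   Context: $I^*$ is a Banach $\mathcal A$-bimodule with $\langle x,a\cdot f\rangle=\langle xa,f\rangle$, $\langle x,f\cdot a\rangle=\langle ax,f\rangle$. A derivation $D:\mathcal A\to Z$ is a continuous linear map with $D(ab)=a\cdot D(b)+D(a)\cdot b$; it is inner if $D(a)=a\cdot z-z\cdot a$ for some $z\in Z$; $H^1(\mathcal A,Z)=\{0\}$ means every derivation is inner. $\mathcal A$ is weakly amenable if $H^1(\mathcal A,\mathcal A^* )=\{0\}$. *)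

theory Defs
  imports "HOL-Analysis.Analysis"
begin

text \<open>Banach algebra: a type of class real_normed_algebra and banach (real scalars).
  The dual I^* of a closed subspace I is represented by functions on the algebra that
  vanish outside I and are bounded linear functionals on I.\<close>

definition dual_space :: "('a::real_normed_vector) set \<Rightarrow> ('a \<Rightarrow> real) set" where
  "dual_space I = {f. (\<forall>x. x \<notin> I \<longrightarrow> f x = 0)
      \<and> (\<forall>x\<in>I. \<forall>y\<in>I. f (x + y) = f x + f y)
      \<and> (\<forall>r. \<forall>x\<in>I. f (r *\<^sub>R x) = r * f x)
      \<and> (\<exists>K. \<forall>x\<in>I. \<bar>f x\<bar> \<le> K * norm x)}"

definition lmod :: "'a::real_normed_algebra set \<Rightarrow> 'a \<Rightarrow> ('a \<Rightarrow> real) \<Rightarrow> ('a \<Rightarrow> real)" where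
  "lmod I a f = (\<lambda>x. if x \<in> I then f (x * a) else 0)"

definition rmod :: "'a::real_normed_algebra set \<Rightarrow> ('a \<Rightarrow> real) \<Rightarrow> 'a \<Rightarrow> ('a \<Rightarrow> real)" where
  "rmod I f a = (\<lambda>x. if x \<in> I then f (a * x) else 0)"

definition derivation_into_dual :: "'a::real_normed_algebra set \<Rightarrow> ('a \<Rightarrow> ('a \<Rightarrow> real)) \<Rightarrow> bool" where
  "derivation_into_dual I D \<longleftrightarrow>
     (\<forall>a. D a \<in> dual_space I)
     \<and> (\<forall>a b. D (a + b) = (\<lambda>x. D a x + D b x))
     \<and> (\<forall>r a. D (r *\<^sub>R a) = (\<lambda>x. r * D a x))
     \<and> (\<exists>C. \<forall>a. \<forall>x\<in>I. \<bar>D a x\<bar> \<le> C * norm a * norm x)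
     \<and> (\<forall>a b. D (a * b) = (\<lambda>x. lmod I a (D b) x + rmod I (D a) b x))"

definition inner_derivation_dual :: "'a::real_normed_algebra set \<Rightarrow> ('a \<Rightarrow> ('a \<Rightarrow> real)) \<Rightarrow> bool" where
  "inner_derivation_dual I D \<longleftrightarrow>
     (\<exists>z \<in> dual_space I. \<forall>a. D a = (\<lambda>x. lmod I a z x - rmod I z a x))"

definition H1_dual_trivial :: "'a::real_normed_algebra set \<Rightarrow> bool" where
  "H1_dual_trivial I \<longleftrightarrow> (\<forall>D. derivation_into_dual I D \<longrightarrow> inner_derivation_dual I D)"

definition weakly_amenable :: "'a::real_normed_algebra itself \<Rightarrow> bool" where
  "weakly_amenable _ \<longleftrightarrow> H1_dual_trivial (UNIV :: 'a set)"

definition closed_ideal :: "'a::real_normed_algebra set \<Rightarrow> bool" where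
  "closed_ideal I \<longleftrightarrow> closed I \<and> subspace I
     \<and> (\<forall>a. \<forall>x\<in>I. a * x \<in> I \<and> x * a \<in> I)"

text \<open>A bounded approximate identity of I, given as a net e along a proper filter F
  (the tail filter of a directed index set).\<close>

definition bounded_approx_identity :: "'a::real_normed_algebra set \<Rightarrow> 'i filter \<Rightarrow> ('i \<Rightarrow> 'a) \<Rightarrow> bool" where
  "bounded_approx_identity I F e \<longleftrightarrow> F \<noteq> bot
     \<and> (\<forall>i. e i \<in> I) \<and> (\<exists>K. \<forall>i. norm (e i) \<le> K)
     \<and> (\<forall>x\<in>I. ((\<lambda>i. e i * x) \<longlongrightarrow> x) F \<and> ((\<lambda>i. x * e i) \<longlongrightarrow> x) F)"

definition quasi_central :: "'i filter \<Rightarrow> ('i \<Rightarrow> 'a::real_normed_algebra) \<Rightarrow> bool" where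
  "quasi_central F e \<longleftrightarrow> (\<forall>a. ((\<lambda>i. a * e i - e i * a) \<longlongrightarrow> 0) F)"

end

theory Submission
  imports Defs
begin
lemma cpt: "compact (PiE UNIV (\<lambda>p::'b. cball (0::real) (B p)))"
proof -
  have "compactin (product_topology (\<lambda>_. euclidean) UNIV) (PiE UNIV (\<lambda>p::'b. cball (0::real) (B p)))"
    by (simp add: compactin_PiE)
  then show ?thesis by (simp add: euclidean_product_topology compactin_euclidean_iff)
qed

lemma cluster:
  fixes \<psi> :: "'i \<Rightarrow> ('b \<Rightarrow> real)"
  assumes "F \<noteq> bot" "\<forall>\<^sub>F i in F. \<forall>p. \<bar>\<psi> i p\<bar> \<le> B p"
  obtains \<phi> where "\<forall>p. \<bar>\<phi> p\<bar> \<le> B p"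
    "\<And>(h::('b \<Rightarrow> real) \<Rightarrow> real) c. continuous_on UNIV h \<Longrightarrow> ((\<lambda>i. h (\<psi> i)) \<longlongrightarrow> c) F \<Longrightarrow> h \<phi> = c"
proof -
  let ?U = "PiE UNIV (\<lambda>p::'b. cball (0::real) (B p))"
  have "filtermap \<psi> F \<noteq> bot" using assms(1) by (simp add: filtermap_bot_iff)
  moreover have "eventually (\<lambda>x. x \<in> ?U) (filtermap \<psi> F)"
    unfolding eventually_filtermap using assms(2) by (auto elim!: eventually_mono simp: PiE_iff)
  ultimately obtain \<phi> where phi: "\<phi> \<in> ?U" "inf (nhds \<phi>) (filtermap \<psi> F) \<noteq> bot"
    using cpt[of B, unfolded compact_filter] by blast
  show ?thesis
  proof (rule that)
    show "\<forall>p. \<bar>\<phi> p\<bar> \<le> B p" using phi(1) by (auto simp: PiE_iff)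
    fix h :: "('b \<Rightarrow> real) \<Rightarrow> real" and c
    assume hc: "continuous_on UNIV h" and lim: "((\<lambda>i. h (\<psi> i)) \<longlongrightarrow> c) F"
    let ?G = "inf (nhds \<phi>) (filtermap \<psi> F)"
    have "(h \<longlongrightarrow> h \<phi>) (at \<phi>)" using hc by (simp add: continuous_on_def)
    then have "(h \<longlongrightarrow> h \<phi>) (nhds \<phi>)" by (simp add: tendsto_at_iff_tendsto_nhds)
    then have 1: "(h \<longlongrightarrow> h \<phi>) ?G" by (rule tendsto_mono[rotated]) simp
    have 2: "(h \<longlongrightarrow> c) ?G"
      using lim by (metis tendsto_mono inf_le2 filterlim_filtermap comp_def)
    show "h \<phi> = c" using tendsto_unique phi(2) 1 2 by blast
  qed
qed

lemma dual_diff: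
  assumes "f \<in> dual_space I" "subspace I" "y \<in> I" "z \<in> I"
  shows "f (y - z) = f y - f z"
proof -
  have mz: "(-1::real) *\<^sub>R z \<in> I" by (rule subspace_scale[OF assms(2) assms(4)])
  have ad: "\<forall>x\<in>I. \<forall>y\<in>I. f (x + y) = f x + f y" and sc: "\<forall>r. \<forall>x\<in>I. f (r *\<^sub>R x) = r * f x"
    using assms(1) unfolding dual_space_def by blast+
  have "f (y + (-1::real) *\<^sub>R z) = f y + f ((-1::real) *\<^sub>R z)"
    using ad assms(3) mz by blast
  moreover have "f ((-1::real) *\<^sub>R z) = (-1) * f z" using sc assms(4) by blast
  ultimately show ?thesis by simp
qed

lemma null_cmp:
  fixes g :: "'i \<Rightarrow> real" and u :: "'i \<Rightarrow> 'b::real_normed_vector"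
  assumes "\<And>i. \<bar>g i\<bar> \<le> M * norm (u i)" "(u \<longlongrightarrow> 0) F"
  shows "(g \<longlongrightarrow> 0) F"
proof (rule Lim_null_comparison)
  show "\<forall>\<^sub>F i in F. norm (g i) \<le> M * norm (u i)" using assms(1) by simp
  show "((\<lambda>i. M * norm (u i)) \<longlongrightarrow> 0) F"
    using tendsto_mult_right_zero[OF tendsto_norm_zero[OF assms(2)]] by simp
qed

lemma null_cmp2:
  fixes g :: "'i \<Rightarrow> real" and u v :: "'i \<Rightarrow> 'b::real_normed_vector"
  assumes "\<And>i. \<bar>g i\<bar> \<le> M * norm (u i) + N * norm (v i)" "(u \<longlongrightarrow> 0) F" "(v \<longlongrightarrow> 0) F"
  shows "(g \<longlongrightarrow> 0) F"
proof (rule Lim_null_comparison)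
  show "\<forall>\<^sub>F i in F. norm (g i) \<le> M * norm (u i) + N * norm (v i)" using assms(1) by simp
  show "((\<lambda>i. M * norm (u i) + N * norm (v i)) \<longlongrightarrow> 0) F"
    using tendsto_add_zero[OF tendsto_mult_right_zero[OF tendsto_norm_zero[OF assms(2)]]
        tendsto_mult_right_zero[OF tendsto_norm_zero[OF assms(3)]]] by simp
qed

theorem theorem3p3:
  fixes I :: "'a::{real_normed_algebra, banach} set"
    and F :: "'i filter" and e :: "'i \<Rightarrow> 'a"
  assumes "weakly_amenable TYPE('a)"
    and "closed_ideal I"
    and "bounded_approx_identity I F e"
    and "quasi_central F e"
  shows "H1_dual_trivial I"
  unfolding H1_dual_trivial_def
proof (intro allI impI)
  fix D assume Dd: "derivation_into_dual I D"
  have sub: "subspace I" and idl: "\<And>a x. x \<in> I \<Longrightarrow> a * x \<in> I \<and> x * a \<in> I"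
    using assms(2) unfolding closed_ideal_def by auto
  have Fnb: "F \<noteq> bot" and eI: "\<And>i. e i \<in> I"
    and appr: "\<And>x. x \<in> I \<Longrightarrow> ((\<lambda>i. e i * x) \<longlongrightarrow> x) F \<and> ((\<lambda>i. x * e i) \<longlongrightarrow> x) F"
    using assms(3) unfolding bounded_approx_identity_def by auto
  obtain K where K: "\<And>i. norm (e i) \<le> K" using assms(3) unfolding bounded_approx_identity_def by auto
  define K0 where "K0 = max K 0"
  have K0: "\<And>i. norm (e i) \<le> K0" "K0 \<ge> 0" using K unfolding K0_def by (auto intro: max.coboundedI1)
  have qc: "\<And>a. ((\<lambda>i. a * e i - e i * a) \<longlongrightarrow> 0) F" using assms(4) unfolding quasi_central_def by auto
  have Ddual: "\<And>a. D a \<in> dual_space I" and Dadd: "\<And>a b. D (a + b) = (\<lambda>x. D a x + D b x)"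
    and Dsc: "\<And>r a. D (r *\<^sub>R a) = (\<lambda>x. r * D a x)"
    and Dl: "\<And>a b. D (a * b) = (\<lambda>x. lmod I a (D b) x + rmod I (D a) b x)"
    using Dd unfolding derivation_into_dual_def by auto
  have "\<exists>C. \<forall>a. \<forall>x\<in>I. \<bar>D a x\<bar> \<le> C * norm a * norm x"
    using Dd unfolding derivation_into_dual_def by (elim conjE)
  then obtain C where C: "\<And>a x. x \<in> I \<Longrightarrow> \<bar>D a x\<bar> \<le> C * norm a * norm x"
    by blast
  define C0 where "C0 = max C 0"
  have C0: "\<And>a x. x \<in> I \<Longrightarrow> \<bar>D a x\<bar> \<le> C0 * norm a * norm x" "C0 \<ge> 0"
  proof -
    fix a x assume "x \<in> I"
    then have "\<bar>D a x\<bar> \<le> C * (norm a * norm x)" using C by (simp add: mult.assoc)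
    also have "\<dots> \<le> C0 * (norm a * norm x)" unfolding C0_def by (intro mult_right_mono) auto
    finally show "\<bar>D a x\<bar> \<le> C0 * norm a * norm x" by (simp add: mult.assoc)
  qed (simp add: C0_def)
  have Dout: "\<And>a x. x \<notin> I \<Longrightarrow> D a x = 0" using Ddual unfolding dual_space_def by auto
  have Dplus: "\<And>a x y. x \<in> I \<Longrightarrow> y \<in> I \<Longrightarrow> D a (x + y) = D a x + D a y"
    using Ddual unfolding dual_space_def by auto
  have Dscx: "\<And>a r x. x \<in> I \<Longrightarrow> D a (r *\<^sub>R x) = r * D a x"
    using Ddual unfolding dual_space_def by auto
  have exeI: "\<And>i x. e i * x * e i \<in> I" using idl eI by auto
  have nexe: "\<And>i x. norm (e i * x * e i) \<le> K0 * K0 * norm x"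
  proof -
    fix i x
    have "norm (e i * x * e i) \<le> norm (e i * x) * norm (e i)" by (rule norm_mult_ineq)
    also have "\<dots> \<le> norm (e i) * norm x * norm (e i)" by (intro mult_right_mono norm_mult_ineq) simp
    also have "\<dots> \<le> K0 * norm x * K0"
      using K0 by (intro mult_mono) (auto intro: mult_right_mono)
    finally show "norm (e i * x * e i) \<le> K0 * K0 * norm x" by (simp add: algebra_simps)
  qed
  define \<psi> where "\<psi> i = (\<lambda>p::'a \<times> 'a. D (fst p) (e i * snd p * e i))" for i
  define B where "B p = C0 * norm (fst p) * (K0 * K0 * norm (snd p))" for p :: "'a \<times> 'a"
  have bnd: "\<forall>\<^sub>F i in F. \<forall>p. \<bar>\<psi> i p\<bar> \<le> B p"
  proof (intro always_eventually allI)
    fix i p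
    have "\<bar>\<psi> i p\<bar> \<le> C0 * norm (fst p) * norm (e i * snd p * e i)"
      unfolding \<psi>_def using C0 exeI by blast
    also have "\<dots> \<le> B p" unfolding B_def using C0(2) nexe
      by (intro mult_left_mono) auto
    finally show "\<bar>\<psi> i p\<bar> \<le> B p" .
  qed
  obtain \<phi> where phb: "\<forall>p. \<bar>\<phi> p\<bar> \<le> B p"
    and phl: "\<And>(h::('a \<times> 'a \<Rightarrow> real) \<Rightarrow> real) c. continuous_on UNIV h \<Longrightarrow> ((\<lambda>i. h (\<psi> i)) \<longlongrightarrow> c) F \<Longrightarrow> h \<phi> = c"
    using cluster[OF Fnb bnd] by blast
  have co: "\<And>p. continuous_on UNIV (\<lambda>f::'a \<times> 'a \<Rightarrow> real. f p)" by simp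
  have phl0: "h \<phi> = 0" if hc: "continuous_on UNIV h" and h0: "\<And>i. h (\<psi> i) = 0" for h :: "('a \<times> 'a \<Rightarrow> real) \<Rightarrow> real"
  proof -
    have "((\<lambda>i. h (\<psi> i)) \<longlongrightarrow> 0) F" using h0 by simp
    then show ?thesis by (rule phl[OF hc])
  qed
  define Dt where "Dt a = (\<lambda>x. \<phi> (a, x))" for a
  have Dt_add: "Dt (a + b) = (\<lambda>x. Dt a x + Dt b x)" for a b
  proof
    fix x
    have "(\<lambda>f::'a \<times> 'a \<Rightarrow> real. f (a + b, x) - f (a, x) - f (b, x)) \<phi> = 0"
      by (rule phl0[where h="(\<lambda>f::'a \<times> 'a \<Rightarrow> real. f (a + b, x) - f (a, x) - f (b, x))"]) (intro continuous_on_diff continuous_on_mult continuous_on_const co, simp add: \<psi>_def Dadd)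
    then show "Dt (a + b) x = Dt a x + Dt b x" unfolding Dt_def by simp
  qed
  have Dt_sc: "Dt (r *\<^sub>R a) = (\<lambda>x. r * Dt a x)" for r a
  proof
    fix x
    have "(\<lambda>f::'a \<times> 'a \<Rightarrow> real. f (r *\<^sub>R a, x) - r * f (a, x)) \<phi> = 0"
      by (rule phl0[where h="(\<lambda>f::'a \<times> 'a \<Rightarrow> real. f (r *\<^sub>R a, x) - r * f (a, x))"]) (intro continuous_on_diff continuous_on_mult continuous_on_const co, simp add: \<psi>_def Dsc)
    then show "Dt (r *\<^sub>R a) x = r * Dt a x" unfolding Dt_def by simp
  qed
  have Dt_bnd: "\<bar>Dt a x\<bar> \<le> (C0 * K0 * K0) * norm a * norm x" for a x
    using phb[rule_format, of "(a, x)"] unfolding Dt_def B_def by (simp add: algebra_simps)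
  have Dt_xadd: "Dt a (x + y) = Dt a x + Dt a y" for a x y
  proof -
    have "(\<lambda>f::'a \<times> 'a \<Rightarrow> real. f (a, x + y) - f (a, x) - f (a, y)) \<phi> = 0"
      by (rule phl0[where h="(\<lambda>f::'a \<times> 'a \<Rightarrow> real. f (a, x + y) - f (a, x) - f (a, y))"]) (intro continuous_on_diff continuous_on_mult continuous_on_const co, simp add: \<psi>_def Dplus exeI distrib_left distrib_right)
    then show ?thesis unfolding Dt_def by simp
  qed
  have Dt_xsc: "Dt a (r *\<^sub>R x) = r * Dt a x" for a r x
  proof -
    have "(\<lambda>f::'a \<times> 'a \<Rightarrow> real. f (a, r *\<^sub>R x) - r * f (a, x)) \<phi> = 0"
      by (rule phl0[where h="(\<lambda>f::'a \<times> 'a \<Rightarrow> real. f (a, r *\<^sub>R x) - r * f (a, x))"]) (intro continuous_on_diff continuous_on_mult continuous_on_const co, simp add: \<psi>_def Dscx exeI)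
    then show ?thesis unfolding Dt_def by simp
  qed
  have Dt_leib: "Dt (a * b) x = Dt b (x * a) + Dt a (b * x)" for a b x
  proof -
    define u where "u i = e i * x * e i * a - e i * (x * a) * e i" for i
    define v where "v i = b * (e i * x * e i) - e i * (b * x) * e i" for i
    have uI: "e i * x * e i * a \<in> I" "e i * (x * a) * e i \<in> I" for i using exeI idl by auto
    have vI: "b * (e i * x * e i) \<in> I" "e i * (b * x) * e i \<in> I" for i using exeI idl by auto
    have u0: "(u \<longlongrightarrow> 0) F"
    proof (rule tendsto_norm_zero_cancel, rule Lim_null_comparison)
      have "norm (u i) \<le> K0 * norm x * norm (a * e i - e i * a)" for i
      proof -
        have "u i = e i * x * (e i * a - a * e i)" unfolding u_def by (simp add: algebra_simps)
        then have "norm (u i) \<le> norm (e i * x) * norm (e i * a - a * e i)"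
          by (simp add: norm_mult_ineq)
        also have "\<dots> \<le> norm (e i) * norm x * norm (e i * a - a * e i)"
          by (intro mult_right_mono norm_mult_ineq) simp
        also have "\<dots> \<le> K0 * norm x * norm (e i * a - a * e i)"
          using K0 by (intro mult_right_mono) auto
        finally show ?thesis by (simp add: norm_minus_commute)
      qed
      then show "\<forall>\<^sub>F i in F. norm (norm (u i)) \<le> K0 * norm x * norm (a * e i - e i * a)" by simp
      show "((\<lambda>i. K0 * norm x * norm (a * e i - e i * a)) \<longlongrightarrow> 0) F"
        using tendsto_mult_right_zero[OF tendsto_norm_zero[OF qc]] by simp
    qed
    have v0: "(v \<longlongrightarrow> 0) F"
    proof (rule tendsto_norm_zero_cancel, rule Lim_null_comparison)
      have "norm (v i) \<le> K0 * norm x * norm (b * e i - e i * b)" for i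
      proof -
        have "v i = (b * e i - e i * b) * x * e i" unfolding v_def by (simp add: algebra_simps)
        then have "norm (v i) \<le> norm ((b * e i - e i * b) * x) * norm (e i)"
          by (simp add: norm_mult_ineq)
        also have "\<dots> \<le> norm (b * e i - e i * b) * norm x * norm (e i)"
          by (intro mult_right_mono norm_mult_ineq) simp
        also have "\<dots> \<le> norm (b * e i - e i * b) * norm x * K0"
          using K0 by (intro mult_left_mono) auto
        finally show ?thesis by (simp add: algebra_simps)
      qed
      then show "\<forall>\<^sub>F i in F. norm (norm (v i)) \<le> K0 * norm x * norm (b * e i - e i * b)" by simp
      show "((\<lambda>i. K0 * norm x * norm (b * e i - e i * b)) \<longlongrightarrow> 0) F"
        using tendsto_mult_right_zero[OF tendsto_norm_zero[OF qc]] by simp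
    qed
    have "(\<lambda>f::'a \<times> 'a \<Rightarrow> real. f (a * b, x) - f (b, x * a) - f (a, b * x)) \<phi> = 0"
    proof (rule phl[where h="(\<lambda>f::'a \<times> 'a \<Rightarrow> real. f (a * b, x) - f (b, x * a) - f (a, b * x))"])
      show "continuous_on UNIV (\<lambda>f::'a \<times> 'a \<Rightarrow> real. f (a * b, x) - f (b, x * a) - f (a, b * x))"
        by (intro continuous_on_diff continuous_on_mult continuous_on_const co)
      show "((\<lambda>i. \<psi> i (a * b, x) - \<psi> i (b, x * a) - \<psi> i (a, b * x)) \<longlongrightarrow> 0) F"
      proof (rule null_cmp2[OF _ u0 v0])
        fix i
        have "\<psi> i (a * b, x) - \<psi> i (b, x * a) - \<psi> i (a, b * x) = D b (u i) + D a (v i)"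
          unfolding \<psi>_def u_def v_def using exeI uI vI
          by (simp add: Dl lmod_def rmod_def dual_diff[OF Ddual sub])
        also have "\<bar>\<dots>\<bar> \<le> C0 * norm b * norm (u i) + C0 * norm a * norm (v i)"
          using C0(1)[of "u i" b] C0(1)[of "v i" a] uI vI sub
          unfolding u_def v_def by (smt (verit) subspace_diff)
        finally show "\<bar>\<psi> i (a * b, x) - \<psi> i (b, x * a) - \<psi> i (a, b * x)\<bar>
          \<le> (C0 * norm b) * norm (u i) + (C0 * norm a) * norm (v i)" by simp
      qed
    qed
    then show ?thesis unfolding Dt_def by simp
  qed
  have Dt_eq: "x \<in> I \<Longrightarrow> Dt a x = D a x" for a x
  proof -
    assume xI: "x \<in> I"
    have w0: "((\<lambda>i. e i * x * e i - x) \<longlongrightarrow> 0) F"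
    proof (rule tendsto_norm_zero_cancel, rule null_cmp2)
      fix i
      have "e i * x * e i - x = e i * (x * e i - x) + (e i * x - x)" by (simp add: algebra_simps)
      then have "norm (e i * x * e i - x) = norm (e i * (x * e i - x) + (e i * x - x))" by (rule arg_cong[where f=norm])
      also have "\<dots> \<le> norm (e i * (x * e i - x)) + norm (e i * x - x)"
        by (rule norm_triangle_ineq)
      also have "\<dots> \<le> norm (e i) * norm (x * e i - x) + norm (e i * x - x)"
        by (intro add_right_mono norm_mult_ineq)
      also have "\<dots> \<le> K0 * norm (x * e i - x) + 1 * norm (e i * x - x)"
        using K0 by (auto intro: mult_right_mono)
      finally show "\<bar>norm (e i * x * e i - x)\<bar> \<le> K0 * norm (x * e i - x) + 1 * norm (e i * x - x)" by simp
    next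
      show "((\<lambda>i. x * e i - x) \<longlongrightarrow> 0) F" using appr[OF xI] LIM_zero by blast
      show "((\<lambda>i. e i * x - x) \<longlongrightarrow> 0) F" using appr[OF xI] LIM_zero by blast
    qed
    then have w1: "((\<lambda>i. norm (e i * x * e i - x)) \<longlongrightarrow> 0) F" by (rule tendsto_norm_zero)
    have "(\<lambda>f::'a \<times> 'a \<Rightarrow> real. f (a, x)) \<phi> = D a x"
    proof (rule phl[OF co[of "(a, x)"]])
      have "((\<lambda>i. \<psi> i (a, x) - D a x) \<longlongrightarrow> 0) F"
      proof (rule null_cmp[OF _ w0])
        fix i
        have "\<psi> i (a, x) - D a x = D a (e i * x * e i - x)"
          unfolding \<psi>_def using dual_diff[OF Ddual sub exeI xI] by simp
        also have "\<bar>\<dots>\<bar> \<le> C0 * norm a * norm (e i * x * e i - x)"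
          using C0(1) exeI xI sub subspace_diff by blast
        finally show "\<bar>\<psi> i (a, x) - D a x\<bar> \<le> C0 * norm a * norm (e i * x * e i - x)" .
      qed
      then show "((\<lambda>i. \<psi> i (a, x)) \<longlongrightarrow> D a x) F" by (rule LIM_zero_cancel)
    qed
    then show ?thesis unfolding Dt_def by simp
  qed
  have "derivation_into_dual UNIV Dt"
    unfolding derivation_into_dual_def
  proof (intro conjI allI)
    fix a
    show "Dt a \<in> dual_space UNIV" unfolding dual_space_def
      using Dt_xadd Dt_xsc Dt_bnd[of a] by auto
  next
    show "\<exists>C. \<forall>a. \<forall>x\<in>UNIV. \<bar>Dt a x\<bar> \<le> C * norm a * norm x" using Dt_bnd by blast
  next
    fix a b
    show "Dt (a * b) = (\<lambda>x. lmod UNIV a (Dt b) x + rmod UNIV (Dt a) b x)"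
      by (rule ext) (simp add: lmod_def rmod_def Dt_leib)
  qed (simp_all add: Dt_add Dt_sc)
  then obtain z where z: "z \<in> dual_space UNIV" "\<And>a. Dt a = (\<lambda>x. lmod UNIV a z x - rmod UNIV z a x)"
    using assms(1) unfolding weakly_amenable_def H1_dual_trivial_def inner_derivation_dual_def by blast
  define z' where "z' x = (if x \<in> I then z x else 0)" for x
  have "z' \<in> dual_space I"
    using z(1) sub unfolding dual_space_def z'_def by (auto simp: subspace_add subspace_scale)
  moreover have "D a = (\<lambda>x. lmod I a z' x - rmod I z' a x)" for a
  proof
    fix x
    show "D a x = lmod I a z' x - rmod I z' a x"
    proof (cases "x \<in> I")
      case True
      have "D a x = Dt a x" using Dt_eq[OF True] by simp
      also have "\<dots> = z (x * a) - z (a * x)" using z(2)[of a] by (simp add: lmod_def rmod_def fun_eq_iff)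
      finally show ?thesis using True idl by (simp add: lmod_def rmod_def z'_def)
    next
      case False
      then show ?thesis by (simp add: Dout lmod_def rmod_def)
    qed
  qed
  ultimately show "inner_derivation_dual I D" unfolding inner_derivation_dual_def by blast
qed

end
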